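(* Let $U:[1,\infty)\to\mathbb R_+$ be increasing to infinity, continuously differentiable, and regularly varying with index $\gamma\ge0$. For $t$ with $U(t)>1$, let $m(t)$ be the $y\ge 1$ such that $U(t/y)=y$. Then: (i) $m$ is well-defined and increasing; (ii) $m$ is continuously differentiable; (iii) $m(t)\to\infty$ and $t/m(t)\to\infty$ as $t\to\infty$; (iv) $m$ is regularly varying with index $\gamma/(\gamma+1)$. Moreover, if $U(t)=t^\gamma L(t)$ with $L$ slowly varying, then, letting $L_1(t)=L(t^{1/(1+\gamma)})$ and $L_1^*$ be a De Bruijn conjugate of $L_1$, $$m(t)\sim t^{\gamma/(\gamma+1)}\,L_1^*(t)^{-1/(1+\gamma)}\quad\text{as } t\to\infty.$$
   Context: A measurable $h:\mathbb R_+\to\mathbb R_+$ is regularly varying with index $\alpha$ if $h(tx)/h(t)\to x^\alpha$ as $t\to\infty$ for every $x>0$; slowly varying means index $0$. For $L$ slowly varying, a De Bruijn conjugate is a slowly varying function $L^*$ with $L^*(x)L(xL^*(x))\to1$ and $L(x)L^*(xL(x))\to1$ as $x\to\infty$ (it exists and is unique up to asymptotic equivalence). $a\sim b$ means $a/b\to1$. *)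

theory Defs
  imports "HOL-Analysis.Analysis" "HOL-Library.Landau_Symbols"
begin

definition regularly_varying :: "real \<Rightarrow> (real \<Rightarrow> real) \<Rightarrow> bool" where
  "regularly_varying \<alpha> h \<longleftrightarrow>
     (\<exists>a>0. (\<forall>t\<ge>a. h t > 0) \<and> h \<in> borel_measurable (restrict_space lborel {a..})) \<and>
     (\<forall>x>0. ((\<lambda>t. h (t * x) / h t) \<longlongrightarrow> x powr \<alpha>) at_top)"

abbreviation slowly_varying :: "(real \<Rightarrow> real) \<Rightarrow> bool" where
  "slowly_varying h \<equiv> regularly_varying 0 h"

definition debruijn_conjugate :: "(real \<Rightarrow> real) \<Rightarrow> (real \<Rightarrow> real) \<Rightarrow> bool" where
  "debruijn_conjugate L Ls \<longleftrightarrow> slowly_varying Ls \<and>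
     ((\<lambda>x. Ls x * L (x * Ls x)) \<longlongrightarrow> 1) at_top \<and>
     ((\<lambda>x. L x * Ls (x * L x)) \<longlongrightarrow> 1) at_top"

end

theory Submission
  imports Defs
begin

locale mU =
  fixes U :: "real \<Rightarrow> real" and U' :: "real \<Rightarrow> real"
  assumes pos: "\<forall>x\<ge>1. U x > 0" and mono: "mono_on {1..} U"
    and infty: "filterlim U at_top at_top"
    and U'c: "continuous_on {1..} U'"
    and der: "\<forall>x\<ge>1. (U has_real_derivative U' x) (at x within {1..})"
begin

definition "D = {t. 1 \<le> t \<and> 1 < U t \<and> U 1 \<le> t}"
definition "mm t = (THE y. 1 \<le> y \<and> y \<le> t \<and> U (t / y) = y)"

lemma Ucont: "continuous_on {1..} U"
  by (rule DERIV_continuous_on) (use der in auto)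

lemma monoU: "1 \<le> a \<Longrightarrow> a \<le> b \<Longrightarrow> U a \<le> U b"
  using mono by (auto simp: mono_on_def)

lemma ex1: assumes "t \<in> D" shows "\<exists>!y. 1 \<le> y \<and> y \<le> t \<and> U (t / y) = y"
proof -
  from assms have t: "1 \<le> t" "1 < U t" "U 1 \<le> t" by (auto simp: D_def)
  have c: "continuous_on {1..t} (\<lambda>y. U (t / y) - y)"
  proof (intro continuous_on_diff continuous_on_id continuous_on_compose2[OF Ucont])
    show "continuous_on {1..t} (\<lambda>y. t / y)" by (intro continuous_intros) auto
    show "(\<lambda>y. t / y) ` {1..t} \<subseteq> {1..}" by auto
  qed
  have "\<exists>y. 1 \<le> y \<and> y \<le> t \<and> U (t / y) - y = 0"
    by (rule IVT2'[OF _ _ _ c]) (use t in auto)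
  then obtain y where y: "1 \<le> y" "y \<le> t" "U (t / y) = y" by auto
  show ?thesis
  proof (rule ex1I[of _ y])
    show "1 \<le> y \<and> y \<le> t \<and> U (t / y) = y" using y by auto
    fix z assume z: "1 \<le> z \<and> z \<le> t \<and> U (t / z) = z"
    show "z = y"
    proof (rule ccontr)
      assume "z \<noteq> y"
      then consider "z < y" | "y < z" by linarith
      then show False
      proof cases
        case 1
        have "t / y \<le> t / z" using 1 z y by (intro divide_left_mono) auto
        moreover have "1 \<le> t / y" using y by auto
        ultimately have "U (t/y) \<le> U (t/z)" by (metis monoU)
        then show False using 1 y z by auto
      next
        case 2
        have "t / z \<le> t / y" using 2 z y by (intro divide_left_mono) auto
        moreover have "1 \<le> t / z" using z by auto
        ultimately have "U (t/z) \<le> U (t/y)" by (metis monoU)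
        then show False using 2 y z by auto
      qed
    qed
  qed
qed

lemma mm: assumes "t \<in> D" shows "1 \<le> mm t" "mm t \<le> t" "U (t / mm t) = mm t"
  using theI'[OF ex1[OF assms]] unfolding mm_def by auto

lemma mm_le: assumes "t \<in> D" "0 < a" "a \<le> t" "U (t / a) \<le> a" shows "mm t \<le> a"
proof (rule ccontr)
  assume "\<not> mm t \<le> a"
  hence "a < mm t" by simp
  have "t / mm t \<le> t / a" using \<open>a < mm t\<close> assms mm[OF assms(1)] by (intro divide_left_mono) auto
  moreover have "1 \<le> t / mm t" using mm[OF assms(1)] by auto
  ultimately have "U (t / mm t) \<le> U (t / a)" by (metis monoU)
  then show False using mm[OF assms(1)] assms \<open>a < mm t\<close> by auto
qed

lemma mm_less: assumes "t \<in> D" "0 < a" "a \<le> t" "U (t / a) < a" shows "mm t < a"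
proof (rule ccontr)
  assume "\<not> mm t < a"
  hence "a \<le> mm t" by simp
  have "t / mm t \<le> t / a" using \<open>a \<le> mm t\<close> assms mm[OF assms(1)] by (intro divide_left_mono) auto
  moreover have "1 \<le> t / mm t" using mm[OF assms(1)] by auto
  ultimately have "U (t / mm t) \<le> U (t / a)" by (metis monoU)
  then show False using mm[OF assms(1)] assms \<open>a \<le> mm t\<close> by auto
qed

lemma mm_ge: assumes "t \<in> D" "0 < a" "a \<le> t" "a \<le> U (t / a)" shows "a \<le> mm t"
proof (rule ccontr)
  assume "\<not> a \<le> mm t"
  hence "mm t < a" by simp
  have "t / a \<le> t / mm t" using \<open>mm t < a\<close> assms mm[OF assms(1)] by (intro divide_left_mono) auto
  moreover have "1 \<le> t / a" using assms by auto
  ultimately have "U (t / a) \<le> U (t / mm t)" by (metis monoU)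
  then show False using mm[OF assms(1)] assms \<open>mm t < a\<close> by auto
qed

lemma mm_greater: assumes "t \<in> D" "0 < a" "a \<le> t" "a < U (t / a)" shows "a < mm t"
proof (rule ccontr)
  assume "\<not> a < mm t"
  hence "mm t \<le> a" by simp
  have "t / a \<le> t / mm t" using \<open>mm t \<le> a\<close> assms mm[OF assms(1)] by (intro divide_left_mono) auto
  moreover have "1 \<le> t / a" using assms by auto
  ultimately have "U (t / a) \<le> U (t / mm t)" by (metis monoU)
  then show False using mm[OF assms(1)] assms \<open>mm t \<le> a\<close> by auto
qed

lemma mono_mm: "mono_on D mm"
proof (rule mono_onI)
  fix s t assume st: "s \<in> D" "t \<in> D" "s \<le> t"
  have "U (s / mm s) \<le> U (t / mm s)" using mm[OF st(1)] st by (intro monoU divide_right_mono) auto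
  then show "mm s \<le> mm t" using mm[OF st(1)] st by (intro mm_ge) auto
qed

lemma ev_D: "eventually (\<lambda>t. t \<in> D) at_top"
proof -
  have "eventually (\<lambda>t. U t > 1) at_top" using infty by (simp add: filterlim_at_top_dense)
  moreover have "eventually (\<lambda>t. t \<ge> max 1 (U 1)) at_top" by (rule eventually_ge_at_top)
  ultimately show ?thesis by eventually_elim (auto simp: D_def)
qed

lemma lim_mult: assumes "c > 0" shows "filterlim (\<lambda>t::real. t * c) at_top at_top"
  unfolding filterlim_at_top
proof
  fix Z :: real
  show "eventually (\<lambda>t. Z \<le> t * c) at_top" using eventually_ge_at_top[of "Z/c"]
    by eventually_elim (use assms in \<open>simp add: divide_le_eq\<close>)
qed

lemma mm_top: "filterlim mm at_top at_top"
  unfolding filterlim_at_top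
proof
  fix Z :: real
  define M where "M = max Z 1"
  have M: "M \<ge> 1" "Z \<le> M" by (auto simp: M_def)
  have "filterlim (\<lambda>t. U (t / M)) at_top at_top"
    using filterlim_compose[OF infty lim_mult[of "inverse M"]] M by (simp add: divide_inverse)
  hence "eventually (\<lambda>t. U (t / M) \<ge> M) at_top" by (simp add: filterlim_at_top)
  moreover have "eventually (\<lambda>t. t \<ge> M) at_top" by (rule eventually_ge_at_top)
  ultimately show "eventually (\<lambda>t. Z \<le> mm t) at_top" using ev_D
  proof eventually_elim
    case (elim t)
    then have "M \<le> mm t" using M by (intro mm_ge) auto
    then show ?case using M by linarith
  qed
qed

lemma tm_top: "filterlim (\<lambda>t. t / mm t) at_top at_top"
  unfolding filterlim_at_top
proof
  fix Z :: real
  define M where "M = max Z 1"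
  have M: "M \<ge> 1" "Z \<le> M" by (auto simp: M_def)
  have "eventually (\<lambda>t. mm t > U M) at_top" using mm_top by (simp add: filterlim_at_top_dense)
  then show "eventually (\<lambda>t. Z \<le> t / mm t) at_top" using ev_D
  proof eventually_elim
    case (elim t)
    show ?case
    proof (rule ccontr)
      assume "\<not> Z \<le> t / mm t"
      hence "t / mm t \<le> M" using M by linarith
      moreover have "1 \<le> t / mm t" using mm[OF elim(2)] by auto
      ultimately have "U (t / mm t) \<le> U M" by (metis monoU)
      then show False using mm[OF elim(2)] elim(1) by auto
    qed
  qed
qed

lemma rv_mm:
  assumes rvU: "\<forall>x>0. ((\<lambda>t. U (t * x) / U t) \<longlongrightarrow> x powr \<gamma>) at_top" and gam: "\<gamma> \<ge> 0"
    and x: "x > 0"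
  shows "((\<lambda>t. mm (t * x) / mm t) \<longlongrightarrow> x powr (\<gamma> / (\<gamma> + 1))) at_top"
proof (rule order_tendstoI)
  define r0 where "r0 = x powr (\<gamma> / (\<gamma> + 1))"
  have r0: "r0 > 0" "r0 powr (\<gamma> + 1) = x powr \<gamma>" using x gam by (auto simp: r0_def powr_powr)
  have apow: "a powr (\<gamma> + 1) = a * a powr \<gamma>" if "a > 0" for a :: real
    using that by (simp add: powr_add mult.commute)
  have evD2: "eventually (\<lambda>t. t \<in> D \<and> t * x \<in> D) at_top"
    using eventually_conj[OF ev_D eventually_compose_filterlim[OF ev_D lim_mult[OF x]]] .
  have comp: "eventually (\<lambda>t. P (t / mm t)) at_top" if "eventually P at_top" for P
    using eventually_compose_filterlim[OF that tm_top] .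
  {
    fix a assume a: "a > x powr (\<gamma> / (\<gamma> + 1))"
    hence a0: "a > 0" using r0 unfolding r0_def by linarith
    define c where "c = x / a"
    have c: "c > 0" using x a0 by (auto simp: c_def)
    have "r0 powr (\<gamma> + 1) < a powr (\<gamma> + 1)" using a r0 gam unfolding r0_def
      by (intro powr_less_mono2) auto
    hence "x powr \<gamma> < a * a powr \<gamma>" using r0 apow[OF a0] by simp
    hence lt: "c powr \<gamma> < a" using x a0 by (simp add: c_def powr_divide divide_less_eq mult.commute)
    have "eventually (\<lambda>s. U (s * c) / U s < a) at_top"
      using order_tendstoD(2)[OF rvU[rule_format, OF c] lt] .
    from comp[OF this] have "eventually (\<lambda>t. U (t / mm t * c) / U (t / mm t) < a) at_top" .
    then show "eventually (\<lambda>t. mm (t * x) / mm t < a) at_top" using evD2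
    proof eventually_elim
      case (elim t)
      note y = mm[OF conjunct1[OF elim(2)]]
      have "U (t / mm t * c) < a * mm t" using elim(1) y by (simp add: divide_less_eq)
      moreover have "t / mm t * c = (t * x) / (a * mm t)" using y a0 by (simp add: c_def)
      ultimately have *: "U ((t * x) / (a * mm t)) < a * mm t" by simp
      have "mm (t * x) < a * mm t"
      proof (cases "a * mm t \<le> t * x")
        case True then show ?thesis using * elim y a0 by (intro mm_less) auto
      next
        case False then show ?thesis using mm[OF conjunct2[OF elim(2)]] by linarith
      qed
      then show ?case using y by (simp add: divide_less_eq)
    qed
  }
  {
    fix a assume a: "a < x powr (\<gamma> / (\<gamma> + 1))"
    show "eventually (\<lambda>t. a < mm (t * x) / mm t) at_top"
    proof (cases "a > 0")
      case False
      show ?thesis using evD2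
      proof eventually_elim
        case (elim t)
        have "0 < mm (t * x) / mm t" using mm[of t] mm[of "t*x"] elim by auto
        then show ?case using False by linarith
      qed
    next
      case a0: True
      define c where "c = x / a"
      have c: "c > 0" using x a0 by (auto simp: c_def)
      have "a powr (\<gamma> + 1) < r0 powr (\<gamma> + 1)" using a r0 gam a0 unfolding r0_def
        by (intro powr_less_mono2) auto
      hence "a * a powr \<gamma> < x powr \<gamma>" using r0 apow[OF a0] by simp
      hence lt: "a < c powr \<gamma>" using x a0 by (simp add: c_def powr_divide less_divide_eq mult.commute)
      have "eventually (\<lambda>s. a < U (s * c) / U s) at_top"
        using order_tendstoD(1)[OF rvU[rule_format, OF c] lt] .
      moreover have "eventually (\<lambda>s. s * c \<ge> 1) at_top"
        using lim_mult[OF c] by (simp add: filterlim_at_top)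
      ultimately have "eventually (\<lambda>s. a < U (s * c) / U s \<and> s * c \<ge> 1) at_top"
        by (rule eventually_conj)
      from comp[OF this] have "eventually (\<lambda>t. a < U (t / mm t * c) / U (t / mm t) \<and> t / mm t * c \<ge> 1) at_top" .
      then show ?thesis using evD2
      proof eventually_elim
        case (elim t)
        note y = mm[OF conjunct1[OF elim(2)]]
        have "a * mm t < U (t / mm t * c)" using elim(1) y by (simp add: less_divide_eq)
        moreover have eq: "t / mm t * c = (t * x) / (a * mm t)" using y a0 by (simp add: c_def)
        ultimately have *: "a * mm t < U ((t * x) / (a * mm t))" by simp
        have "1 \<le> (t * x) / (a * mm t)" using elim(1) eq by simp
        hence "a * mm t \<le> t * x" using y a0 by (simp add: le_divide_eq)
        hence "a * mm t < mm (t * x)" using * elim y a0 by (intro mm_greater) auto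
        then show ?case using y by (simp add: less_divide_eq)
      qed
    qed
  }
qed


lemma derat: "p > 1 \<Longrightarrow> (U has_real_derivative U' p) (at p)"
proof -
  assume p: "p > 1"
  have "at p within {1..} = at p" by (rule at_within_interior) (use p in simp)
  then show ?thesis using der p by (metis less_imp_le)
qed

lemma U'_nonneg: assumes "p > 1" shows "U' p \<ge> 0"
proof -
  have "((\<lambda>z. (U z - U p) / (z - p)) \<longlongrightarrow> U' p) (at p)"
    using derat[OF assms] by (simp add: has_field_derivative_iff)
  hence lim: "((\<lambda>z. (U z - U p) / (z - p)) \<longlongrightarrow> U' p) (at_right p)"
    by (rule tendsto_mono[OF at_le, rotated]) simp
  have "eventually (\<lambda>z. z > p) (at_right p)" by (simp add: eventually_at_right_less)
  hence "eventually (\<lambda>z. (U z - U p) / (z - p) \<ge> 0) (at_right p)"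
  proof eventually_elim
    case (elim z)
    have "U p \<le> U z" using elim assms by (intro monoU) auto
    then show ?case using elim by auto
  qed
  then show ?thesis using tendsto_lowerbound[OF lim] by (simp add: trivial_limit_at_right_real)
qed

lemma isContU: "p > 1 \<Longrightarrow> isCont U p"
  using derat DERIV_isCont by blast

lemma isContU': "p > 1 \<Longrightarrow> isCont U' p"
  using continuous_on_interior[OF U'c] by simp

lemma int_D: assumes "t \<in> interior D" shows "t \<in> D" "t > U 1" "t > 1"
proof -
  show "t \<in> D" using assms interior_subset by blast
  obtain e where e: "e > 0" "ball t e \<subseteq> D" using assms mem_interior by blast
  have "t - e/2 \<in> ball t e" using e by (simp add: dist_real_def)
  hence "t - e/2 \<in> D" using e by blast
  then show "t > U 1" "t > 1" using e by (auto simp: D_def)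
qed

lemma mm_lt: assumes "t \<in> D" "t > U 1" shows "mm t < t"
proof -
  have "mm t \<noteq> t"
  proof
    assume e: "mm t = t"
    have "t > 0" using assms(1) by (auto simp: D_def)
    hence "t / mm t = 1" using e by simp
    hence "U 1 = t" using mm(3)[OF assms(1)] e by simp
    then show False using assms(2) by simp
  qed
  then show ?thesis using mm[OF assms(1)] by linarith
qed

lemma cont_mm: assumes tI: "t \<in> interior D" shows "isCont mm t"
  unfolding isCont_def
proof (rule order_tendstoI)
  note tD = int_D[OF tI]
  note y = mm[OF tD(1)]
  have ylt: "mm t < t" using mm_lt tD by auto
  have evI: "eventually (\<lambda>s. s \<in> D) (at t)"
    using eventually_at_in_open'[OF open_interior tI] interior_subset
    by (metis (mono_tags, lifting) eventually_mono subsetD)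
  fix a assume a: "a > mm t"
  define a' where "a' = min a ((mm t + t)/2)"
  have a': "mm t < a'" "a' < t" "a' \<le> a" using a ylt unfolding a'_def by (auto simp: min_less_iff_disj)
  have p1: "t / a' > 1" using a' y by (simp add: less_divide_eq)
  have "U (t / a') \<le> U (t / mm t)" using a' y p1 by (intro monoU divide_left_mono) auto
  hence lt: "U (t / a') < a'" using y a' by linarith
  have ci: "isCont (\<lambda>s. s / a') t" using a' y by (intro continuous_intros) auto
  have "isCont (\<lambda>s. U (s / a')) t" using isCont_o2[OF ci, of U] isContU[OF p1] by blast
  hence "eventually (\<lambda>s. U (s / a') < a') (at t)" using order_tendstoD(2)[OF _ lt] by (simp add: isCont_def)
  moreover have "eventually (\<lambda>s. a' < s) (at t)" using order_tendstoD(1)[OF tendsto_ident_at a'(2)] .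
  ultimately show "eventually (\<lambda>s. mm s < a) (at t)" using evI
  proof eventually_elim
    case (elim s) then have "mm s < a'" using a' y by (intro mm_less) auto
    then show ?case using a' by linarith
  qed
next
  fix a assume a: "a < mm t"
  note tD = int_D[OF tI]
  note y = mm[OF tD(1)]
  have evI: "eventually (\<lambda>s. s \<in> D) (at t)"
    using eventually_at_in_open'[OF open_interior tI] interior_subset
    by (metis (mono_tags, lifting) eventually_mono subsetD)
  show "eventually (\<lambda>s. a < mm s) (at t)"
  proof (cases "a < 1")
    case True
    show ?thesis using evI by eventually_elim (use True mm in force)
  next
    case False
    have at: "a < t" using a y by linarith
    have p1: "t / a > 1" using a y False by (simp add: less_divide_eq)
    have "U (t / mm t) \<le> U (t / a)" using a y False by (intro monoU divide_left_mono) auto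
    hence lt: "a < U (t / a)" using y a by linarith
    have ci: "isCont (\<lambda>s. s / a) t" using False by (intro continuous_intros) auto
    have "isCont (\<lambda>s. U (s / a)) t" using isCont_o2[OF ci, of U] isContU[OF p1] by blast
    hence "eventually (\<lambda>s. a < U (s / a)) (at t)" using order_tendstoD(1)[OF _ lt] by (simp add: isCont_def)
    moreover have "eventually (\<lambda>s. a < s) (at t)" using order_tendstoD(1)[OF tendsto_ident_at at] .
    ultimately show ?thesis using evI
    proof eventually_elim
      case (elim s) then show ?case using False by (intro mm_greater) auto
    qed
  qed
qed


definition "mm' t = U' (t / mm t) * mm t / (mm t * mm t + U' (t / mm t) * t)"

lemma p_gt1: assumes "t \<in> interior D" shows "t / mm t > 1"
proof -
  have "mm t < t" using int_D[OF assms] mm_lt by blast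
  moreover have "mm t \<ge> 1" using mm(1) int_D(1)[OF assms] by blast
  ultimately show ?thesis by (simp add: less_divide_eq)
qed

lemma denom_pos: assumes "t \<in> interior D" shows "mm t * mm t + U' (t / mm t) * t > 0"
proof -
  have "U' (t / mm t) * t \<ge> 0" using U'_nonneg[OF p_gt1[OF assms]] int_D[OF assms] by simp
  moreover have "mm t * mm t > 0" using mm[OF int_D(1)[OF assms]] by simp
  ultimately show ?thesis by linarith
qed

lemma isCont_mm': assumes "t \<in> interior D" shows "isCont mm' t"
proof -
  note c = cont_mm[OF assms]
  have m0: "mm t \<noteq> 0" using mm[OF int_D(1)[OF assms]] by simp
  have c2: "isCont (\<lambda>t. t / mm t) t" using c m0 by (intro continuous_intros) auto
  have c3: "isCont (\<lambda>t. U' (t / mm t)) t" using isCont_o2[OF c2, of U'] isContU'[OF p_gt1[OF assms]] by blast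
  show ?thesis unfolding mm'_def using c c3 denom_pos[OF assms]
    by (intro continuous_intros) auto
qed

lemma deriv_mm: assumes tI: "t \<in> interior D" shows "(mm has_real_derivative mm' t) (at t)"
proof -
  note tD = int_D[OF tI]
  define y where "y = mm t"
  define p where "p = t / y"
  have y: "1 \<le> y" "U p = y" using mm[OF tD(1)] by (auto simp: y_def p_def)
  have p1: "p > 1" using p_gt1[OF tI] by (simp add: p_def y_def)
  from iffD1[OF DERIV_caratheodory_within derat[OF p1]]
  obtain g where g: "\<forall>z. U z - U p = g z * (z - p)" "continuous (at p) g" "g p = U' p"
    by blast
  have gnn: "g z \<ge> 0" if "z \<ge> 1" for z
  proof (cases "z = p")
    case True then show ?thesis using g(3) U'_nonneg[OF p1] by simp
  next
    case False
    have eq: "g z = (U z - U p) / (z - p)" using g(1) False by (simp add: eq_divide_eq)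
    show ?thesis
    proof (cases "z < p")
      case True then have "U z \<le> U p" using that by (intro monoU) auto
      then show ?thesis using True eq by (simp add: divide_nonpos_neg)
    next
      case F: False then have "U p \<le> U z" using p1 by (intro monoU) auto
      then show ?thesis using F False eq by simp
    qed
  qed
  define \<phi> where "\<phi> s = g (s / mm s) * y / (y * mm s + g (s / mm s) * t)" for s
  have evI: "eventually (\<lambda>s. s \<in> D - {t}) (at t)"
    using eventually_at_in_open[OF open_interior tI]
    by (rule eventually_mono) (use interior_subset in blast)
  have eq: "(mm s - mm t) / (s - t) = \<phi> s" if s: "s \<in> D - {t}" for s
  proof -
    define ys where "ys = mm s"
    define G where "G = g (s / ys)"
    have ys: "1 \<le> ys" "U (s / ys) = ys" "ys \<le> s" using mm[of s] s by (auto simp: ys_def)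
    have G: "G \<ge> 0" using ys by (auto simp: G_def intro!: gnn)
    have e1: "ys - y = G * (s / ys - t / y)" using g(1)[rule_format, of "s/ys"] ys y
      by (simp add: G_def p_def)
    moreover have "s / ys - t / y = (s * y - t * ys) / (y * ys)" using ys y
      by (simp add: diff_frac_eq mult.commute)
    ultimately have "ys - y = G * (s * y - t * ys) / (y * ys)" by simp
    hence "(ys - y) * (y * ys) = G * (s * y - t * ys)" using ys y
      by (simp add: eq_divide_eq)
    hence e2: "(ys - y) * (y * ys + G * t) = G * y * (s - t)" by (simp add: algebra_simps)
    have "y * ys > 0" using ys y by simp
    moreover have "G * t \<ge> 0" using G tD by simp
    ultimately have dpos: "y * ys + G * t > 0" by linarith
    have "s - t \<noteq> 0" using s by auto
    have "(ys - y) / (s - t) = G * y / (y * ys + G * t)"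
      using e2 dpos \<open>s - t \<noteq> 0\<close> by (simp add: frac_eq_eq mult.commute)
    then show ?thesis
      unfolding \<phi>_def G_def ys_def y_def by simp
  qed
  have mc: "(mm \<longlongrightarrow> y) (at t)" using cont_mm[OF tI] by (simp add: isCont_def y_def)
  have qc: "((\<lambda>s. s / mm s) \<longlongrightarrow> p) (at t)" unfolding p_def
    by (intro tendsto_intros mc) (use y in auto)
  have gc: "((\<lambda>s. g (s / mm s)) \<longlongrightarrow> U' p) (at t)"
    using isCont_tendsto_compose[OF g(2) qc] g(3) by simp
  have den: "y * y + U' p * t \<noteq> 0" using denom_pos[OF tI] by (simp add: y_def p_def)
  have "(\<phi> \<longlongrightarrow> U' p * y / (y * y + U' p * t)) (at t)" unfolding \<phi>_def
    by (intro tendsto_intros gc mc den)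
  moreover have "U' p * y / (y * y + U' p * t) = mm' t" by (simp add: mm'_def y_def p_def)
  ultimately have "(\<phi> \<longlongrightarrow> mm' t) (at t)" by simp
  hence "((\<lambda>s. (mm s - mm t) / (s - t)) \<longlongrightarrow> mm' t) (at t)"
    by (rule Lim_transform_eventually) (use evI eq in \<open>auto elim!: eventually_mono\<close>)
  then show ?thesis by (simp add: has_field_derivative_iff)
qed


lemma debruijn:
  fixes L L1s :: "real \<Rightarrow> real" and \<gamma> :: real
  assumes gam: "\<gamma> \<ge> 0" and L1spos: "\<exists>a>0. \<forall>t\<ge>a. L1s t > 0"
    and UL: "\<forall>t\<ge>1. U t = t powr \<gamma> * L t"
    and conj: "((\<lambda>x. L (x powr (1 / (1 + \<gamma>))) * L1s (x * L (x powr (1 / (1 + \<gamma>))))) \<longlongrightarrow> 1) at_top"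
  shows "mm \<sim>[at_top] (\<lambda>t. t powr (\<gamma> / (\<gamma> + 1)) * L1s t powr (- 1 / (1 + \<gamma>)))"
proof (rule asymp_equivI')
  define k where "k = 1 + \<gamma>"
  have k: "k \<ge> 1" "k > 0" "k \<noteq> 0" using gam by (auto simp: k_def)
  define w where "w t = t / mm t" for t
  define v where "v t = w t powr k" for t
  obtain a where a: "a > 0" "\<forall>t\<ge>a. L1s t > 0" using L1spos by blast
  have evB: "eventually (\<lambda>t. L1s t > 0) at_top"
    using a by (auto simp: eventually_at_top_linorder)
  have facts: "w t \<ge> 1 \<and> L (w t) > 0 \<and> mm t = w t powr \<gamma> * L (w t) \<and> t = w t powr k * L (w t)
      \<and> v t powr (1 / k) = w t" if tD: "t \<in> D" for t
  proof -
    note y = mm[OF tD]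
    have w1: "w t \<ge> 1" using y by (simp add: w_def)
    have m: "mm t = w t powr \<gamma> * L (w t)" using UL w1 y by (simp add: w_def)
    have "w t powr \<gamma> > 0" using w1 by simp
    moreover have "mm t > 0" using y by simp
    ultimately have Lp: "L (w t) > 0" using m by (simp add: zero_less_mult_iff)
    have "t = w t * mm t" using y by (simp add: w_def)
    also have "\<dots> = w t powr k * L (w t)" using m w1 by (simp add: k_def powr_add)
    finally have tt: "t = w t powr k * L (w t)" .
    have "v t powr (1 / k) = w t" using w1 k by (simp add: v_def powr_powr)
    then show ?thesis using w1 Lp m tt by blast
  qed
  have vtop: "filterlim v at_top at_top"
  proof (rule filterlim_at_top_mono[OF tm_top])
    show "eventually (\<lambda>t. t / mm t \<le> v t) at_top" using ev_D
    proof eventually_elim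
      case (elim t)
      have w1: "w t \<ge> 1" using facts[OF elim] by blast
      have "w t powr 1 \<le> w t powr k" using w1 k by (intro powr_mono) auto
      moreover have "w t powr 1 = w t" using w1 by simp
      ultimately have "w t \<le> w t powr k" by simp
      then show ?case unfolding v_def w_def .
    qed
  qed
  have lim1: "((\<lambda>t. L (v t powr (1 / (1 + \<gamma>))) * L1s (v t * L (v t powr (1 / (1 + \<gamma>))))) \<longlongrightarrow> 1) at_top"
    using filterlim_compose[OF conj vtop] by simp
  have lim2: "((\<lambda>t. L (w t) * L1s t) \<longlongrightarrow> 1) at_top"
  proof (rule Lim_transform_eventually[OF lim1])
    show "eventually (\<lambda>t. L (v t powr (1 / (1 + \<gamma>))) * L1s (v t * L (v t powr (1 / (1 + \<gamma>)))) = L (w t) * L1s t) at_top"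
      using ev_D
    proof eventually_elim
      case (elim t)
      note f = facts[OF elim]
      have "v t * L (w t) = t" using f by (simp add: v_def)
      then show ?case using f by (simp add: k_def)
    qed
  qed
  have lim3: "((\<lambda>t. (L (w t) * L1s t) powr (1 / k)) \<longlongrightarrow> 1) at_top"
    using tendsto_powr[OF lim2 tendsto_const[of "1/k"]] by simp
  show "((\<lambda>t. mm t / (t powr (\<gamma> / (\<gamma> + 1)) * L1s t powr (- 1 / (1 + \<gamma>)))) \<longlongrightarrow> 1) at_top"
  proof (rule Lim_transform_eventually[OF lim3])
    show "eventually (\<lambda>t. (L (w t) * L1s t) powr (1 / k) =
        mm t / (t powr (\<gamma> / (\<gamma> + 1)) * L1s t powr (- 1 / (1 + \<gamma>)))) at_top"
      using ev_D evB
    proof eventually_elim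
      case (elim t)
      note f = facts[OF elim(1)]
      define A where "A = L (w t)"
      define B where "B = L1s t"
      define W where "W = w t"
      have A: "A > 0" and B: "B > 0" and W: "W \<ge> 1" using f elim by (auto simp: A_def B_def W_def)
      have m: "mm t = W powr \<gamma> * A" and tt: "t = W powr k * A" using f by (auto simp: A_def W_def)
      have e1: "t powr (\<gamma> / (\<gamma> + 1)) = W powr \<gamma> * A powr (\<gamma> / k)"
        using A W k unfolding tt by (simp add: powr_mult powr_powr k_def add.commute)
      have e2: "L1s t powr (- 1 / (1 + \<gamma>)) = inverse (B powr (1 / k))"
        using B by (simp add: B_def k_def powr_minus[symmetric])
      have e3: "A = A powr (\<gamma> / k) * A powr (1 / k)"
      proof -
        have "\<gamma> / k + 1 / k = 1" using k by (simp add: k_def add_divide_distrib[symmetric])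
        then show ?thesis using A by (simp add: powr_add[symmetric])
      qed
      have "mm t / (t powr (\<gamma> / (\<gamma> + 1)) * L1s t powr (- 1 / (1 + \<gamma>)))
          = W powr \<gamma> * (A powr (\<gamma> / k) * A powr (1 / k)) / (W powr \<gamma> * A powr (\<gamma> / k) * inverse (B powr (1 / k)))"
        using m e1 e2 e3 by simp
      also have "\<dots> = A powr (1 / k) * B powr (1 / k)"
        using A B W by (simp add: field_simps)
      also have "\<dots> = (A * B) powr (1 / k)" using A B by (simp add: powr_mult)
      finally show ?case by (simp add: A_def B_def)
    qed
  qed
qed

end

theorem lemma1:
  fixes U :: "real \<Rightarrow> real" and \<gamma> :: real
  assumes pos: "\<forall>x\<ge>1. U x > 0"
    and mono: "mono_on {1..} U"
    and infty: "filterlim U at_top at_top"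
    and C1: "\<exists>U'. continuous_on {1..} U' \<and>
               (\<forall>x\<ge>1. (U has_real_derivative U' x) (at x within {1..}))"
    and rv: "regularly_varying \<gamma> U"
    and gam: "\<gamma> \<ge> 0"
  defines "D \<equiv> {t. 1 \<le> t \<and> 1 < U t \<and> U 1 \<le> t}"
    and "m \<equiv> (\<lambda>t. THE y. 1 \<le> y \<and> y \<le> t \<and> U (t / y) = y)"
  shows "(\<forall>t\<in>D. \<exists>!y. 1 \<le> y \<and> y \<le> t \<and> U (t / y) = y) \<and> mono_on D m
     \<and> (\<exists>m'. continuous_on (interior D) m' \<and>
             (\<forall>t\<in>interior D. (m has_real_derivative m' t) (at t)))
     \<and> filterlim m at_top at_top \<and> filterlim (\<lambda>t. t / m t) at_top at_top
     \<and> regularly_varying (\<gamma> / (\<gamma> + 1)) m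
     \<and> (\<forall>L L1s. slowly_varying L \<and> (\<forall>t\<ge>1. U t = t powr \<gamma> * L t)
          \<and> debruijn_conjugate (\<lambda>t. L (t powr (1 / (1 + \<gamma>)))) L1s
          \<longrightarrow> m \<sim>[at_top] (\<lambda>t. t powr (\<gamma> / (\<gamma> + 1)) * L1s t powr (- 1 / (1 + \<gamma>))))"
proof -
  obtain U' where U': "continuous_on {1..} U'" "\<forall>x\<ge>1. (U has_real_derivative U' x) (at x within {1..})"
    using C1 by blast
  interpret I: mU U U' using pos mono infty U' by unfold_locales auto
  have Deq: "D = I.D" unfolding D_def I.D_def ..
  have meq: "m = I.mm" unfolding m_def by (rule ext) (simp add: I.mm_def)
  have rvU: "\<forall>x>0. ((\<lambda>t. U (t * x) / U t) \<longlongrightarrow> x powr \<gamma>) at_top"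
    using rv unfolding regularly_varying_def by blast
  have P1: "\<forall>t\<in>D. \<exists>!y. 1 \<le> y \<and> y \<le> t \<and> U (t / y) = y" using I.ex1 Deq by blast
  have P2: "mono_on D m" using I.mono_mm Deq meq by simp
  have P3: "\<exists>m'. continuous_on (interior D) m' \<and> (\<forall>t\<in>interior D. (m has_real_derivative m' t) (at t))"
  proof (intro exI conjI ballI)
    show "continuous_on (interior D) I.mm'"
      using I.isCont_mm' Deq by (intro continuous_at_imp_continuous_on) auto
    fix t assume "t \<in> interior D"
    then show "(m has_real_derivative I.mm' t) (at t)" using I.deriv_mm Deq meq by simp
  qed
  have P4: "filterlim m at_top at_top" using I.mm_top meq by simp
  have P5: "filterlim (\<lambda>t. t / m t) at_top at_top" using I.tm_top meq by simp
  have P6: "regularly_varying (\<gamma> / (\<gamma> + 1)) m"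
    unfolding regularly_varying_def
  proof (intro conjI allI impI)
    obtain a0 where a0: "\<forall>t\<ge>a0. t \<in> I.D" using I.ev_D by (auto simp: eventually_at_top_linorder)
    define a where "a = max a0 1"
    have aD: "{a..} \<subseteq> I.D" using a0 by (auto simp: a_def)
    have "mono_on {a..} I.mm" using I.mono_mm aD by (rule mono_on_subset)
    hence "I.mm \<in> borel_measurable (restrict_space borel {a..})" by (rule borel_measurable_mono_on_fnc)
    moreover have "sets (restrict_space lborel {a..}) = sets (restrict_space borel {a..})"
      by (simp add: sets_restrict_space)
    ultimately have "I.mm \<in> borel_measurable (restrict_space lborel {a..})"
      using measurable_cong_sets[of "restrict_space lborel {a..}" "restrict_space borel {a..}" borel borel] by simp
    moreover have "\<forall>t\<ge>a. I.mm t > 0" using aD I.mm(1) by (smt (verit) atLeast_iff subsetD)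
    moreover have "a > 0" by (simp add: a_def)
    ultimately show "\<exists>a>0. (\<forall>t\<ge>a. m t > 0) \<and> m \<in> borel_measurable (restrict_space lborel {a..})"
      using meq by blast
  next
    fix x :: real assume "x > 0"
    then show "((\<lambda>t. m (t * x) / m t) \<longlongrightarrow> x powr (\<gamma> / (\<gamma> + 1))) at_top"
      using I.rv_mm[OF rvU gam] meq by simp
  qed
  have P7: "\<forall>L L1s. slowly_varying L \<and> (\<forall>t\<ge>1. U t = t powr \<gamma> * L t)
          \<and> debruijn_conjugate (\<lambda>t. L (t powr (1 / (1 + \<gamma>)))) L1s
          \<longrightarrow> m \<sim>[at_top] (\<lambda>t. t powr (\<gamma> / (\<gamma> + 1)) * L1s t powr (- 1 / (1 + \<gamma>)))"
  proof (intro allI impI)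
    fix L L1s :: "real \<Rightarrow> real"
    assume H: "slowly_varying L \<and> (\<forall>t\<ge>1. U t = t powr \<gamma> * L t)
          \<and> debruijn_conjugate (\<lambda>t. L (t powr (1 / (1 + \<gamma>)))) L1s"
    have pos1: "\<exists>a>0. \<forall>t\<ge>a. L1s t > 0" using H unfolding debruijn_conjugate_def regularly_varying_def by blast
    have cj: "((\<lambda>x. L (x powr (1 / (1 + \<gamma>))) * L1s (x * L (x powr (1 / (1 + \<gamma>))))) \<longlongrightarrow> 1) at_top"
      using H unfolding debruijn_conjugate_def by blast
    show "m \<sim>[at_top] (\<lambda>t. t powr (\<gamma> / (\<gamma> + 1)) * L1s t powr (- 1 / (1 + \<gamma>)))"
      using I.debruijn[OF gam pos1 _ cj] H meq by simp
  qed
  show ?thesis using P1 P2 P3 P4 P5 P6 P7 by blast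
qed
end
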